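(* Let $d_n$ denote the number of derangements of $n$ elements (permutations of $\{1,\dots,n\}$ with no fixed points). Then the sequence $\{d_n\}_{n\ge 3}$ is asymptotically infinitely log-monotonic: for every integer $k\ge 0$ there exists $N\ge 3$ such that $\{d_n\}_{n\ge N}$ is log-monotonic of order $k$.
   Context: For a sequence $\{z_n\}$ of positive numbers, define the operator $R\{z_n\}=\{z_{n+1}/z_n\}$. A sequence of positive numbers $\{x_n\}$ is log-convex if $x_{n-1}x_{n+1}\ge x_n^2$ and log-concave if $x_{n-1}x_{n+1}\le x_n^2$, for all indices where these terms are defined. A sequence $\{z_n\}$ is log-monotonic of order $k$ if for every odd $r\le k-1$ the sequence $R^r\{z_n\}$ is log-concave and for every even $r\le k-1$ (including $r=0$) the sequence $R^r\{z_n\}$ is log-convex. *)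

theory Defs
  imports "HOL-Combinatorics.Permutations" Complex_Main
begin

definition derangements_count :: "nat \<Rightarrow> nat" where
  "derangements_count n = card {p. p permutes {1..n} \<and> (\<forall>x\<in>{1..n}. p x \<noteq> x)}"

definition ratio_op :: "(nat \<Rightarrow> real) \<Rightarrow> nat \<Rightarrow> real" where
  "ratio_op z = (\<lambda>n. z (Suc n) / z n)"

definition log_convex_from :: "nat \<Rightarrow> (nat \<Rightarrow> real) \<Rightarrow> bool" where
  "log_convex_from N z \<longleftrightarrow> (\<forall>n\<ge>N. z n > 0) \<and> (\<forall>n\<ge>N. z n * z (n + 2) \<ge> (z (n + 1))\<^sup>2)"

definition log_concave_from :: "nat \<Rightarrow> (nat \<Rightarrow> real) \<Rightarrow> bool" where
  "log_concave_from N z \<longleftrightarrow> (\<forall>n\<ge>N. z n > 0) \<and> (\<forall>n\<ge>N. z n * z (n + 2) \<le> (z (n + 1))\<^sup>2)"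

definition log_monotonic_from :: "nat \<Rightarrow> nat \<Rightarrow> (nat \<Rightarrow> real) \<Rightarrow> bool" where
  "log_monotonic_from k N z \<longleftrightarrow>
     (\<forall>r. r + 1 \<le> k \<longrightarrow>
        (odd r \<longrightarrow> log_concave_from N ((ratio_op ^^ r) z)) \<and>
        (even r \<longrightarrow> log_convex_from N ((ratio_op ^^ r) z)))"

end

theory Submission
  imports Defs
begin


definition DS :: "'a set \<Rightarrow> ('a \<Rightarrow> 'a) set" where
  "DS A = {p. p permutes A \<and> (\<forall>x\<in>A. p x \<noteq> x)}"

fun ee :: "nat \<Rightarrow> nat" where
  "ee 0 = 1" | "ee (Suc 0) = 0" | "ee (Suc (Suc n)) = (Suc n) * (ee (Suc n) + ee n)"

lemma DS_finite: "finite A \<Longrightarrow> finite (DS A)"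
  unfolding DS_def by (rule finite_subset[OF _ finite_permutations[of A]]) auto

lemma DS_slice:
  assumes a: "a \<notin> A" and b: "b \<in> A"
  shows "{p \<in> DS (insert a A). p a = b} = (\<lambda>q. transpose a b \<circ> q) ` (DS A \<union> DS (A - {b}))"
proof
  show "{p \<in> DS (insert a A). p a = b} \<subseteq> (\<lambda>q. transpose a b \<circ> q) ` (DS A \<union> DS (A - {b}))"
  proof
    fix p assume "p \<in> {p \<in> DS (insert a A). p a = b}"
    then have pp: "p permutes insert a A" and pf: "\<forall>x\<in>insert a A. p x \<noteq> x" and pa: "p a = b"
      by (auto simp: DS_def)
    define q where "q = transpose a b \<circ> p"
    have peq: "p = transpose a b \<circ> q" unfolding q_def by (simp add: comp_assoc[symmetric])
    have qp: "q permutes insert a A" unfolding q_def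
      by (rule permutes_compose[OF pp permutes_swap_id]) (use b in auto)
    have qa: "q a = a" using pa by (simp add: q_def)
    show "p \<in> (\<lambda>q. transpose a b \<circ> q) ` (DS A \<union> DS (A - {b}))"
    proof (cases "p b = a")
      case True
      have "q b = b" using True by (simp add: q_def)
      have "q permutes A - {b}"
        by (rule permutes_superset[OF qp]) (use qa \<open>q b = b\<close> in auto)
      moreover have "\<forall>x\<in>A - {b}. q x \<noteq> x"
      proof
        fix x assume x: "x \<in> A - {b}"
        then have "x \<noteq> a" using a by auto
        show "q x \<noteq> x"
        proof
          assume "q x = x"
          then have "p x = transpose a b x" using peq by simp
          with x \<open>x \<noteq> a\<close> have "p x = x" by simp
          with pf x show False by auto
        qed
      qed
      ultimately have "q \<in> DS (A - {b})" by (simp add: DS_def)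
      with peq show ?thesis by blast
    next
      case False
      have "q permutes A"
        by (rule permutes_superset[OF qp]) (use qa in auto)
      moreover have "\<forall>x\<in>A. q x \<noteq> x"
      proof
        fix x assume x: "x \<in> A"
        then have "x \<noteq> a" using a by auto
        show "q x \<noteq> x"
        proof (cases "x = b")
          case True
          have "p b \<noteq> b" using pf b by auto
          then show ?thesis using True False by (simp add: q_def)
        next
          case False
          show ?thesis
          proof
            assume "q x = x"
            then have "p x = transpose a b x" using peq by simp
            with False \<open>x \<noteq> a\<close> have "p x = x" by simp
            with pf x show False by auto
          qed
        qed
      qed
      ultimately have "q \<in> DS A" by (simp add: DS_def)
      with peq show ?thesis by blast
    qed
  qed
next
  show "(\<lambda>q. transpose a b \<circ> q) ` (DS A \<union> DS (A - {b})) \<subseteq> {p \<in> DS (insert a A). p a = b}"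
  proof
    fix p assume "p \<in> (\<lambda>q. transpose a b \<circ> q) ` (DS A \<union> DS (A - {b}))"
    then obtain q where peq: "p = transpose a b \<circ> q" and q: "q \<in> DS A \<union> DS (A - {b})" by blast
    have ab: "a \<noteq> b" using a b by auto
    show "p \<in> {p \<in> DS (insert a A). p a = b}"
    proof (cases "q \<in> DS A")
      case True
      then have qp: "q permutes A" and qf: "\<forall>x\<in>A. q x \<noteq> x" by (auto simp: DS_def)
      have qa: "q a = a" using qp a by (simp add: permutes_not_in)
      have "p permutes insert a A" unfolding peq
        by (rule permutes_compose[OF permutes_subset[OF qp] permutes_swap_id]) (use b in auto)
      moreover have "\<forall>x\<in>insert a A. p x \<noteq> x"
      proof
        fix x assume x: "x \<in> insert a A"
        show "p x \<noteq> x"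
        proof (cases "x = a")
          case True then show ?thesis using peq qa ab by simp
        next
          case False
          then have xA: "x \<in> A" using x by auto
          have qxA: "q x \<in> A" using qp xA by (simp add: permutes_in_image)
          then have "q x \<noteq> a" using a by auto
          show ?thesis
          proof (cases "q x = b")
            case True then show ?thesis using peq False by simp
          next
            case False2: False
            then show ?thesis using peq \<open>q x \<noteq> a\<close> qf xA by simp
          qed
        qed
      qed
      moreover have "p a = b" using peq qa by simp
      ultimately show ?thesis by (simp add: DS_def)
    next
      case False
      then have "q \<in> DS (A - {b})" using q by blast
      then have qp: "q permutes A - {b}" and qf: "\<forall>x\<in>A - {b}. q x \<noteq> x" by (auto simp: DS_def)
      have qa: "q a = a" using qp a by (simp add: permutes_not_in)
      have qb: "q b = b" using qp by (simp add: permutes_not_in)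
      have "p permutes insert a A" unfolding peq
        by (rule permutes_compose[OF permutes_subset[OF qp] permutes_swap_id]) (use b in auto)
      moreover have "\<forall>x\<in>insert a A. p x \<noteq> x"
      proof
        fix x assume x: "x \<in> insert a A"
        show "p x \<noteq> x"
        proof (cases "x = a \<or> x = b")
          case True then show ?thesis using peq qa qb ab by auto
        next
          case False
          then have xA: "x \<in> A - {b}" using x by auto
          have qxA: "q x \<in> A - {b}" using permutes_in_image[OF qp, of x] xA by simp
          then have "q x \<noteq> a" "q x \<noteq> b" using a by auto
          then show ?thesis using peq qf xA by simp
        qed
      qed
      moreover have "p a = b" using peq qa by simp
      ultimately show ?thesis by (simp add: DS_def)
    qed
  qed
qed

lemma DS_slice_card:
  assumes fin: "finite A" and a: "a \<notin> A" and b: "b \<in> A"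
  shows "card {p \<in> DS (insert a A). p a = b} = card (DS A) + card (DS (A - {b}))"
proof -
  have inj: "inj (\<lambda>q. transpose a b \<circ> q)"
    by (rule injI) (metis comp_assoc transpose_comp_involutory comp_id id_comp)
  have disj: "DS A \<inter> DS (A - {b}) = {}"
    using b by (auto simp: DS_def permutes_not_in)
  have "card {p \<in> DS (insert a A). p a = b} = card (DS A \<union> DS (A - {b}))"
    unfolding DS_slice[OF a b] by (rule card_image[OF inj_on_subset[OF inj]]) auto
  also have "\<dots> = card (DS A) + card (DS (A - {b}))"
    by (rule card_Un_disjoint) (use fin disj DS_finite in auto)
  finally show ?thesis .
qed

lemma DS_insert_card:
  assumes fin: "finite A" and a: "a \<notin> A"
  shows "card (DS (insert a A)) = (\<Sum>b\<in>A. card (DS A) + card (DS (A - {b})))"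
proof -
  have eq: "DS (insert a A) = (\<Union>b\<in>A. {p \<in> DS (insert a A). p a = b})"
  proof (rule set_eqI, rule iffI)
    fix p assume p: "p \<in> DS (insert a A)"
    then have pp: "p permutes insert a A" and pa: "p a \<noteq> a" unfolding DS_def by auto
    have "p a \<in> insert a A" using permutes_in_image[OF pp, of a] by simp
    with pa have "p a \<in> A" by simp
    moreover have "p \<in> {q \<in> DS (insert a A). q a = p a}" using p by simp
    ultimately show "p \<in> (\<Union>b\<in>A. {p \<in> DS (insert a A). p a = b})" by (rule UN_I)
  next
    fix p assume "p \<in> (\<Union>b\<in>A. {p \<in> DS (insert a A). p a = b})"
    then show "p \<in> DS (insert a A)" by blast
  qed
  have fins: "\<forall>b\<in>A. finite {p \<in> DS (insert a A). p a = b}"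
    using DS_finite[of "insert a A"] fin by simp
  have disj: "\<forall>b\<in>A. \<forall>c\<in>A. b \<noteq> c \<longrightarrow> {p \<in> DS (insert a A). p a = b} \<inter> {p \<in> DS (insert a A). p a = c} = {}"
    by blast
  have "card (DS (insert a A)) = card (\<Union>b\<in>A. {p \<in> DS (insert a A). p a = b})"
    using eq by (rule arg_cong)
  also have "\<dots> = (\<Sum>b\<in>A. card {p \<in> DS (insert a A). p a = b})"
    by (rule card_UN_disjoint[OF fin fins disj])
  also have "\<dots> = (\<Sum>b\<in>A. card (DS A) + card (DS (A - {b})))"
    by (rule sum.cong[OF refl]) (rule DS_slice_card[OF fin a])
  finally show ?thesis .
qed



lemma DS_card: "finite A \<Longrightarrow> card (DS A) = ee (card A)"
proof (induction "card A" arbitrary: A rule: less_induct)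
  case less
  show ?case
  proof (cases "A = {}")
    case True
    then show ?thesis by (simp add: DS_def)
  next
    case False
    then obtain a where aA: "a \<in> A" by blast
    define B where "B = A - {a}"
    have A1: "A = insert a B" using aA by (auto simp: B_def)
    have A2: "a \<notin> B" by (simp add: B_def)
    have A3: "finite B" using less.prems by (simp add: B_def)
    have cB: "card A = Suc (card B)" using A1 A2 A3 by simp
    have IH1: "card (DS B) = ee (card B)"
      using less.hyps[of B] cB A3 by simp
    have IH2: "card (DS (B - {b})) = ee (card B - 1)" if bB: "b \<in> B" for b
    proof -
      have "card (B - {b}) = card B - 1" using bB A3 by simp
      moreover have "card (B - {b}) < card A" using bB A3 cB by (simp add: card_Diff1_less)
      ultimately show ?thesis using less.hyps[of "B - {b}"] A3 by simp
    qed
    have "card (DS A) = (\<Sum>b\<in>B. card (DS B) + card (DS (B - {b})))"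
      unfolding A1 by (rule DS_insert_card[OF A3 A2])
    also have "\<dots> = (\<Sum>b\<in>B. ee (card B) + ee (card B - 1))"
      by (rule sum.cong[OF refl]) (simp add: IH1 IH2)
    also have "\<dots> = card B * (ee (card B) + ee (card B - 1))" by simp
    also have "\<dots> = ee (card A)"
      unfolding cB by (cases "card B") simp_all
    finally show ?thesis .
  qed
qed


lemma ee_rec: "int (ee (Suc n)) = int (Suc n) * int (ee n) + (-1)^(Suc n)"
proof (induction n)
  case 0 then show ?case by simp
next
  case (Suc n)
  have e: "ee (Suc (Suc n)) = Suc n * ee (Suc n) + Suc n * ee n"
    by (simp add: add_mult_distrib2)
  have "int (ee (Suc (Suc n))) = int (Suc n) * int (ee (Suc n)) + int (Suc n) * int (ee n)"
    unfolding e by (simp add: algebra_simps)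
  also have "int (Suc n) * int (ee n) = int (ee (Suc n)) - (-1)^(Suc n)" using Suc.IH by simp
  finally have "int (ee (Suc (Suc n))) = int (Suc n) * int (ee (Suc n)) + int (ee (Suc n)) - (-1)^(Suc n)"
    by simp
  then show ?case by (simp add: algebra_simps)
qed

lemma dc_ee: "derangements_count m = ee m"
proof -
  have "derangements_count m = card (DS {1..m})"
    unfolding derangements_count_def DS_def by simp
  also have "\<dots> = ee m" using DS_card[of "{1..m}"] by simp
  finally show ?thesis .
qed

lemma dc_rec: "real (derangements_count (Suc n)) = real (Suc n) * real (derangements_count n) + (-1)^(Suc n)"
proof -
  have "real_of_int (int (ee (Suc n))) = real_of_int (int (Suc n) * int (ee n) + (-1)^(Suc n))"
    using ee_rec[of n] by (rule arg_cong)
  then show ?thesis unfolding dc_ee by simp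
qed

lemma dc0: "derangements_count 0 = 1"
  unfolding dc_ee by simp



definition Dn :: "(nat \<Rightarrow> real) \<Rightarrow> nat \<Rightarrow> real" where
  "Dn s = (\<lambda>n. s (Suc n) - s n)"

definition Df :: "(real \<Rightarrow> real) \<Rightarrow> real \<Rightarrow> real" where
  "Df f = (\<lambda>x. f (x + 1) - f x)"

lemma mvt_diff:
  assumes "F 0 = f" "\<And>k x. x > 0 \<Longrightarrow> (F k has_real_derivative F (Suc k) x) (at x)" "x > 0"
  shows "\<exists>\<xi>. x \<le> \<xi> \<and> \<xi> \<le> x + real j \<and> (Df^^j) f x = F j \<xi>"
  using assms
proof (induction j arbitrary: f F)
  case 0
  then show ?case by auto
next
  case (Suc j)
  define G where "G = (\<lambda>k. Df (F k))"
  have G0: "G 0 = Df f" using Suc.prems by (simp add: G_def)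
  have Gd: "(G k has_real_derivative G (Suc k) y) (at y)" if "y > 0" for k y
  proof -
    have "(F k has_real_derivative F (Suc k) (y + 1)) (at (y + 1))"
      using Suc.prems(2)[of "y+1" k] that by simp
    then have "((\<lambda>x. F k (x + 1)) has_real_derivative F (Suc k) (y + 1)) (at y)"
      by (simp add: DERIV_shift)
    moreover have "(F k has_real_derivative F (Suc k) y) (at y)" using Suc.prems(2) that by simp
    ultimately show ?thesis unfolding G_def Df_def by (rule DERIV_diff)
  qed
  obtain \<xi> where xi: "x \<le> \<xi>" "\<xi> \<le> x + real j" "(Df^^j) (Df f) x = G j \<xi>"
    using Suc.IH[OF G0 Gd Suc.prems(3)] by blast
  have "\<exists>z. \<xi> < z \<and> z < \<xi> + 1 \<and> F j (\<xi> + 1) - F j \<xi> = (\<xi> + 1 - \<xi>) * F (Suc j) z"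
    by (rule MVT2) (use Suc.prems(2,3) xi in auto)
  then obtain z where z: "\<xi> < z" "z < \<xi> + 1" "F j (\<xi> + 1) - F j \<xi> = F (Suc j) z" by auto
  have "(Df^^Suc j) f x = (Df^^j) (Df f) x" unfolding funpow_Suc_right by simp
  also have "\<dots> = F (Suc j) z" using xi z by (simp add: G_def Df_def)
  finally show ?case using xi z by (intro exI[of _ z]) auto
qed

fun FL :: "nat \<Rightarrow> real \<Rightarrow> real" where
  "FL 0 = (\<lambda>x. ln (x + 1))"
| "FL (Suc k) = (\<lambda>x. (-1)^k * fact k / (x + 1)^(Suc k))"

lemma gen_aux:
  fixes y p c n :: real
  assumes "y \<noteq> 0" "p \<noteq> 0"
  shows "c * (-(n * p * inverse ((y*p)^Suc(Suc 0)))) = -(c*n)/(y*(y*p))"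
proof -
  have "(y*p)^Suc(Suc 0) = (y*(y*p)) * p" by (simp add: algebra_simps)
  then show ?thesis using assms by (simp add: inverse_eq_divide)
qed

lemma FL_deriv:
  assumes "x > 0"
  shows "(FL k has_real_derivative FL (Suc k) x) (at x)"
proof (cases k)
  case 0
  then show ?thesis using assms
    by (auto intro!: derivative_eq_intros)
next
  case (Suc i)
  have x1: "x + 1 \<noteq> 0" using assms by simp
  have d0: "((\<lambda>x. x^(Suc i)) has_real_derivative (real (Suc i) * (x + 1)^i)) (at (x + 1))"
    using DERIV_pow[of "Suc i" "x + 1" UNIV] by simp
  have d1: "((\<lambda>x. (x + 1)^(Suc i)) has_real_derivative (real (Suc i) * (x + 1)^i)) (at x)"
    using d0 by (simp add: DERIV_shift)
  have d2: "((\<lambda>x. inverse ((x + 1)^(Suc i))) has_real_derivative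
      - (real (Suc i) * (x + 1)^i * inverse (((x + 1)^(Suc i))^Suc (Suc 0)))) (at x)"
    by (rule DERIV_inverse_fun[OF d1]) (use x1 in simp)
  have d3: "((\<lambda>x. (-1)^i * fact i * inverse ((x + 1)^(Suc i))) has_real_derivative
      (-1)^i * fact i * (- (real (Suc i) * (x + 1)^i * inverse (((x + 1)^(Suc i))^Suc (Suc 0))))) (at x)"
    by (rule DERIV_cmult[OF d2])
  have e: "(-1)^i * fact i * (- (real (Suc i) * (x + 1)^i * inverse (((x + 1)^(Suc i))^Suc (Suc 0))))
      = (-1)^(Suc i) * fact (Suc i) / (x + 1)^(Suc (Suc i))"
  proof -
    have p: "(x+1)^i \<noteq> 0" using x1 by simp
    have "(-1)^i * fact i * (- (real (Suc i) * (x + 1)^i * inverse (((x + 1)^(Suc i))^Suc (Suc 0))))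
       = -((-1)^i * fact i * real (Suc i)) / ((x+1) * ((x+1) * (x+1)^i))"
      unfolding power_Suc[of "x+1" i] by (rule gen_aux[OF x1 p])
    also have "\<dots> = (-1)^(Suc i) * fact (Suc i) / (x + 1)^(Suc (Suc i))"
      by (simp add: fact_Suc algebra_simps)
    finally show ?thesis .
  qed
  show ?thesis using d3 unfolding Suc e by (simp add: divide_inverse)
qed


lemma Dn_Df: "(Dn^^j) (\<lambda>n. f (real n)) n = (Df^^j) f (real n)"
proof (induction j arbitrary: n)
  case 0 then show ?case by simp
next
  case (Suc j)
  have "(Dn^^Suc j) (\<lambda>n. f (real n)) n = (Dn^^j) (\<lambda>n. f (real n)) (Suc n) - (Dn^^j) (\<lambda>n. f (real n)) n"
    by (simp only: funpow.simps comp_apply Dn_def)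
  also have "\<dots> = (Df^^j) f (real n + 1) - (Df^^j) f (real n)"
  proof -
    have "real (Suc n) = real n + 1" by simp
    then show ?thesis by (simp only: Suc.IH)
  qed
  also have "\<dots> = (Df^^Suc j) f (real n)"
    by (simp only: funpow.simps comp_apply Df_def)
  finally show ?case .
qed

lemma ln_lower:
  assumes "n \<ge> 1"
  shows "(-1)^i * (Dn^^(Suc i)) (\<lambda>n. ln (real n + 1)) n \<ge> fact i / (real n + 1 + real (Suc i))^(Suc i)"
proof -
  have x: "real n > 0" using assms by simp
  obtain \<xi> where xi: "real n \<le> \<xi>" "\<xi> \<le> real n + real (Suc i)" "(Df^^(Suc i)) (FL 0) (real n) = FL (Suc i) \<xi>"
    using mvt_diff[of FL "FL 0", OF refl FL_deriv x] by blast
  have "(Dn^^(Suc i)) (\<lambda>n. ln (real n + 1)) n = (Dn^^(Suc i)) (\<lambda>n. FL 0 (real n)) n" by simp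
  also have "\<dots> = FL (Suc i) \<xi>" using xi(3) by (simp only: Dn_Df)
  finally have e: "(-1)^i * (Dn^^(Suc i)) (\<lambda>n. ln (real n + 1)) n = fact i / (\<xi> + 1)^(Suc i)"
    by (simp add: mult.assoc[symmetric] power_add[symmetric] flip: power_mult_distrib)
  have p1: "(\<xi> + 1)^(Suc i) \<le> (real n + 1 + real (Suc i))^(Suc i)"
    by (rule power_mono) (use xi x in auto)
  have p2: "0 < (\<xi> + 1)^(Suc i)" using xi x by simp
  have "fact i / (real n + 1 + real (Suc i))^(Suc i) \<le> fact i / (\<xi> + 1)^(Suc i)"
    by (rule divide_left_mono[OF p1]) (use p1 p2 in auto)
  then show ?thesis using e by simp
qed

lemma Dn_add: "(Dn^^j) (\<lambda>n. a n + b n) = (\<lambda>n. (Dn^^j) a n + (Dn^^j) b n)"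
  by (induction j) (auto simp: Dn_def)

lemma Dn_bound:
  assumes "\<forall>i\<ge>n. \<bar>w i\<bar> \<le> M"
  shows "\<bar>(Dn^^j) w n\<bar> \<le> 2^j * M"
  using assms
proof (induction j arbitrary: w M)
  case 0 then show ?case by simp
next
  case (Suc j)
  have "\<forall>i\<ge>n. \<bar>Dn w i\<bar> \<le> 2 * M"
  proof (intro allI impI)
    fix i assume "i \<ge> n"
    then have "\<bar>w (Suc i)\<bar> \<le> M" "\<bar>w i\<bar> \<le> M" using Suc.prems by auto
    then show "\<bar>Dn w i\<bar> \<le> 2 * M" by (simp add: Dn_def)
  qed
  from Suc.IH[OF this] have "\<bar>(Dn^^j) (Dn w) n\<bar> \<le> 2^j * (2 * M)" .
  then show ?case unfolding funpow_Suc_right by (simp add: algebra_simps)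
qed

lemma ratio_log:
  assumes "\<forall>n\<ge>N. z n > 0" "n \<ge> N"
  shows "(ratio_op^^m) z n > 0 \<and> ln ((ratio_op^^m) z n) = (Dn^^m) (\<lambda>n. ln (z n)) n"
  using assms(2)
proof (induction m arbitrary: n)
  case 0 then show ?case using assms(1) by simp
next
  case (Suc m)
  have a: "(ratio_op^^m) z (Suc n) > 0" "ln ((ratio_op^^m) z (Suc n)) = (Dn^^m) (\<lambda>n. ln (z n)) (Suc n)"
    using Suc.IH[of "Suc n"] Suc.prems by auto
  have b: "(ratio_op^^m) z n > 0" "ln ((ratio_op^^m) z n) = (Dn^^m) (\<lambda>n. ln (z n)) n"
    using Suc.IH[of n] Suc.prems by auto
  have r: "(ratio_op^^Suc m) z n = (ratio_op^^m) z (Suc n) / (ratio_op^^m) z n"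
    by (simp only: funpow.simps comp_apply ratio_op_def)
  have d: "(Dn^^Suc m) (\<lambda>n. ln (z n)) n = (Dn^^m) (\<lambda>n. ln (z n)) (Suc n) - (Dn^^m) (\<lambda>n. ln (z n)) n"
    by (simp only: funpow.simps comp_apply Dn_def)
  show ?case unfolding r d using a b by (simp add: ln_div)
qed


lemma dd_ge: "real (derangements_count (Suc (Suc m))) \<ge> fact (Suc m)"
proof (induction m)
  case 0
  have "real (derangements_count 1) = 0" using dc_rec[of 0] dc0 by simp
  then have "real (derangements_count 2) = 1" using dc_rec[of 1] by (simp add: numeral_2_eq_2)
  then show ?case by (simp add: numeral_2_eq_2)
next
  case (Suc m)
  let ?d = "real (derangements_count (Suc (Suc m)))"
  have d1: "?d \<ge> 1" using Suc.IH fact_ge_1[of "Suc m", where 'a=real] by linarith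
  have "real (derangements_count (Suc (Suc (Suc m)))) = real (Suc (Suc (Suc m))) * ?d + (-1)^(Suc (Suc (Suc m)))"
    by (rule dc_rec)
  also have "\<dots> \<ge> real (Suc (Suc (Suc m))) * ?d - 1"
    by (cases "even m") auto
  finally have A: "real (derangements_count (Suc (Suc (Suc m)))) \<ge> real (Suc (Suc (Suc m))) * ?d - 1" .
  have B: "real (Suc (Suc (Suc m))) * ?d - 1 \<ge> real (Suc (Suc m)) * ?d"
    using d1 by (simp add: algebra_simps)
  have "real (derangements_count (Suc (Suc (Suc m)))) \<ge> real (Suc (Suc m)) * ?d"
    using A B by linarith
  moreover have "real (Suc (Suc m)) * ?d \<ge> real (Suc (Suc m)) * fact (Suc m)"
    using Suc.IH by (intro mult_left_mono) auto
  moreover have "fact (Suc (Suc m)) = real (Suc (Suc m)) * (fact (Suc m) :: real)" by (rule fact_Suc)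
  ultimately show ?case by linarith
qed

lemma dd_ge2: "n \<ge> 2 \<Longrightarrow> real (derangements_count n) \<ge> fact (n - 1)"
  using dd_ge[of "n - 2"] by (simp add: Suc_diff_Suc numeral_2_eq_2)

lemma dd_pos: "n \<ge> 2 \<Longrightarrow> real (derangements_count n) > 0"
  using dd_ge2[of n] fact_ge_1[of "n-1", where 'a=real] by linarith

lemma w_bound:
  assumes n: "n \<ge> 2"
  shows "\<bar>ln (real (derangements_count (Suc n))) - ln (real (derangements_count n)) - ln (real n + 1)\<bar> \<le> 2 / fact (n - 1)"
proof -
  define D where "D = real (derangements_count n)"
  define s :: real where "s = (-1)^(Suc n)"
  define t where "t = s / ((real n + 1) * D)"
  have D1: "D \<ge> fact (n - 1)" using dd_ge2[OF n] by (simp add: D_def)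
  have Dpos: "D \<ge> 1" using D1 fact_ge_1[of "n-1", where 'a=real] by linarith
  have as: "\<bar>s\<bar> = 1" by (simp add: s_def)
  have at: "\<bar>t\<bar> = 1 / ((real n + 1) * D)" using as Dpos by (simp add: t_def abs_divide abs_mult)
  have "(real n + 1) * D \<ge> 3 * 1" using n Dpos by (intro mult_mono) auto
  then have t3: "\<bar>t\<bar> \<le> 1/3" unfolding at by (simp add: divide_simps)
  have tD: "\<bar>t\<bar> \<le> 1 / D"
  proof -
    have "D \<le> (real n + 1) * D" using Dpos by simp
    then show ?thesis unfolding at using Dpos by (intro divide_left_mono) auto
  qed
  have ts: "(real n + 1) * D * t = s" using Dpos by (simp add: t_def)
  have zs0: "real (derangements_count (Suc n)) = (real n + 1) * D + s"
    using dc_rec[of n] by (simp add: D_def s_def)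
  have zs: "real (derangements_count (Suc n)) = (real n + 1) * D * (1 + t)"
    unfolding zs0 using ts by (simp add: algebra_simps)
  have pos1: "1 + t > 0" using t3 by (simp add: abs_le_iff)
  have "ln (real (derangements_count (Suc n))) = ln (real n + 1) + ln D + ln (1 + t)"
    unfolding zs using pos1 Dpos by (simp add: ln_mult)
  then have e: "ln (real (derangements_count (Suc n))) - ln (real (derangements_count n)) - ln (real n + 1) = ln (1 + t)"
    by (simp add: D_def)
  have b: "\<bar>ln (1 + t) - t\<bar> \<le> 2 * t^2" by (rule abs_ln_one_plus_x_minus_x_bound) (use t3 in simp)
  have "2 * t^2 \<le> \<bar>t\<bar>"
  proof -
    have "2 * t^2 = (2 * \<bar>t\<bar>) * \<bar>t\<bar>" by (simp add: power2_eq_square abs_mult_self_eq)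
    also have "\<dots> \<le> 1 * \<bar>t\<bar>" using t3 by (intro mult_right_mono) auto
    finally show ?thesis by simp
  qed
  then have "\<bar>ln (1 + t)\<bar> \<le> 2 * \<bar>t\<bar>" using b by linarith
  also have "\<dots> \<le> 2 * (1 / D)" using tD by simp
  also have "\<dots> = 2 / D" by simp
  also have "\<dots> \<le> 2 / fact (n - 1)"
    using D1 Dpos by (intro divide_left_mono) auto
  finally show ?thesis using e by simp
qed

lemma poly_fact:
  fixes C c :: real
  assumes C: "C > 0" and c: "c \<ge> 1"
  shows "\<exists>M. \<forall>m\<ge>M. C * (real m + c)^k < fact m"
proof -
  define a where "a m = C * (real m + c)^k / fact m" for m
  define M0 :: nat where "M0 = 2^(k+1)"
  have step: "a (Suc m) \<le> a m / 2" if m: "m \<ge> M0" for m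
  proof -
    have "(real (Suc m) + c)^k \<le> (2 * (real m + c))^k"
      by (rule power_mono) (use c in auto)
    also have "\<dots> = 2^k * (real m + c)^k" by (rule power_mult_distrib)
    finally have p: "(real (Suc m) + c)^k \<le> 2^k * (real m + c)^k" .
    have "real m \<ge> 2^(k+1)" using m unfolding M0_def
      by (metis of_nat_le_iff of_nat_numeral of_nat_power)
    then have f: "fact (Suc m) \<ge> (2::real)^(k+1) * fact m"
      by (simp add: fact_Suc[of m] del: fact_Suc)
    have fp: "(fact m :: real) > 0" by simp
    have "a (Suc m) = C * (real (Suc m) + c)^k / fact (Suc m)" by (simp add: a_def)
    also have "\<dots> \<le> C * (2^k * (real m + c)^k) / ((2::real)^(k+1) * fact m)"
      by (intro frac_le mult_left_mono p f) (use C c in auto)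
    also have "\<dots> = a m / 2" by (simp add: a_def field_simps)
    finally show ?thesis .
  qed
  have iter: "a (M0 + i) \<le> a M0 / 2^i" for i
  proof (induction i)
    case 0 then show ?case by simp
  next
    case (Suc i)
    have "a (M0 + Suc i) \<le> a (M0 + i) / 2" using step[of "M0 + i"] by simp
    also have "\<dots> \<le> a M0 / 2^i / 2" using Suc.IH by simp
    finally show ?case by simp
  qed
  obtain i0 where i0: "a M0 < 2^i0" using real_arch_pow[of 2 "a M0"] by auto
  have "C * (real m + c)^k < fact m" if m: "m \<ge> M0 + i0" for m
  proof -
    obtain i where i: "m = M0 + i" "i \<ge> i0" 
    proof
      show "m = M0 + (m - M0)" using m by simp
      show "m - M0 \<ge> i0" using m by simp
    qed
    have aM0: "a M0 \<ge> 0" using C c by (simp add: a_def)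
    have "a m \<le> a M0 / 2^i" using iter i by simp
    also have "\<dots> \<le> a M0 / 2^i0" using aM0 i by (intro divide_left_mono) auto
    also have "\<dots> < 1" using i0 by simp
    finally have "a m < 1" .
    then show ?thesis by (simp add: a_def)
  qed
  then show ?thesis by blast
qed




theorem theorem3p1:
  shows "\<forall>k::nat. \<exists>N\<ge>3. log_monotonic_from k N (\<lambda>n. real (derangements_count n))"
proof
  fix k :: nat
  define z where "z = (\<lambda>n. real (derangements_count n))"
  define L where "L = (\<lambda>n. ln (z n))"
  define w where "w = (\<lambda>n. Dn L n - ln (real n + 1))"
  obtain M where M: "\<forall>m\<ge>M. 2^(k+1) * (real m + real (k+2))^k < (fact m :: real)"
    using poly_fact[of "2^(k+1)" "real (k+2)" k] by auto
  define N where "N = max 3 (M+1)"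
  have N3: "N \<ge> 3" by (simp add: N_def)
  have zpos: "\<forall>n\<ge>N. z n > 0" using N3 dd_pos by (simp add: z_def)
  have wb: "\<bar>w i\<bar> \<le> 2 / fact (n - 1)" if n: "n \<ge> 2" and i: "i \<ge> n" for n i
  proof -
    have "\<bar>w i\<bar> \<le> 2 / fact (i - 1)"
      using w_bound[of i] n i by (simp add: w_def Dn_def L_def z_def)
    also have "\<dots> \<le> 2 / fact (n - 1)"
    proof (rule divide_left_mono)
      show "(fact (n - 1) :: real) \<le> fact (i - 1)" using i by (intro fact_mono) auto
    qed auto
    finally show ?thesis .
  qed
  have key: "(-1)^r * (Dn^^(Suc (Suc r))) L n > 0" if r: "r + 1 \<le> k" and n: "n \<ge> N" for r n
  proof -
    have DL: "Dn L = (\<lambda>n. ln (real n + 1) + w n)" by (simp add: w_def fun_eq_iff)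
    define A where "A = (Dn^^Suc r) (\<lambda>n. ln (real n + 1)) n"
    define B where "B = (Dn^^Suc r) w n"
    have AB: "(Dn^^(Suc (Suc r))) L n = A + B"
    proof -
      have "(Dn^^(Suc (Suc r))) L = (Dn^^Suc r) (Dn L)" by (simp only: funpow_Suc_right comp_apply)
      then show ?thesis unfolding DL Dn_add A_def B_def by simp
    qed
    define Q where "Q = real n + 1 + real (Suc r)"
    have hA: "(-1)^r * A \<ge> fact r / Q^(Suc r)"
      unfolding A_def Q_def by (rule ln_lower) (use n N3 in simp)
    have hB: "\<bar>B\<bar> \<le> 2^(Suc r) * (2 / fact (n - 1))"
      unfolding B_def by (rule Dn_bound) (use wb n N3 in auto)
    define m where "m = n - 1"
    have mM: "m \<ge> M" using n by (simp add: m_def N_def)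
    have hM: "2^(k+1) * (real m + real (k+2))^k < (fact m :: real)" using M mM by simp
    have Q1: "Q \<ge> 1" by (simp add: Q_def)
    have Qle: "Q \<le> real m + real (k+2)" using r n N3 by (simp add: Q_def m_def)
    have "Q^(Suc r) \<le> (real m + real (k+2))^(Suc r)" by (rule power_mono[OF Qle]) (use Q1 in simp)
    also have "\<dots> \<le> (real m + real (k+2))^k" by (rule power_increasing) (use r in auto)
    finally have q1: "Q^(Suc r) \<le> (real m + real (k+2))^k" .
    have q2: "(2::real)^(Suc r) * 2 \<le> 2^(k+1)"
    proof -
      have "(2::real)^(Suc r) * 2 = 2^(Suc (Suc r))" by simp
      also have "\<dots> \<le> 2^(k+1)" by (rule power_increasing) (use r in auto)
      finally show ?thesis .
    qed
    have Qp: "Q^(Suc r) > 0" using Q1 by simp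
    have "(2::real)^(Suc r) * 2 * Q^(Suc r) \<le> 2^(k+1) * (real m + real (k+2))^k"
      using mult_mono[OF q2 q1 _ less_imp_le[OF Qp]] by simp
    with hM have main: "(2::real)^(Suc r) * 2 * Q^(Suc r) < fact m" by linarith
    have fm: "(fact m :: real) > 0" by simp
    have "2^(Suc r) * (2 / fact (n - 1)) = (2::real)^(Suc r) * 2 / fact m" by (simp add: m_def)
    also have "\<dots> < 1 / Q^(Suc r)" using main fm Qp by (simp add: field_simps)
    also have "\<dots> \<le> fact r / Q^(Suc r)" using Qp by (intro divide_right_mono) auto
    finally have "\<bar>B\<bar> < fact r / Q^(Suc r)" using hB by linarith
    then have "\<bar>(-1)^r * B\<bar> < fact r / Q^(Suc r)" by (simp add: abs_mult)
    then have "(-1)^r * A + (-1)^r * B > 0" using hA by linarith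
    then show ?thesis unfolding AB by (simp add: algebra_simps)
  qed
  have conv: "(-1)^r * ((ratio_op^^r) z n * (ratio_op^^r) z (n + 2) - ((ratio_op^^r) z (n + 1))^2) > 0"
    if r: "r + 1 \<le> k" and n: "n \<ge> N" for r n
  proof -
    define Y where "Y = (ratio_op^^r) z"
    define a where "a = (Dn^^r) L"
    have Ye: "Y i = exp (a i)" if "i \<ge> N" for i
    proof -
      have h: "(ratio_op^^r) z i > 0" "ln ((ratio_op^^r) z i) = (Dn^^r) (\<lambda>n. ln (z n)) i"
        using ratio_log[OF zpos that, of r] by auto
      have "(ratio_op^^r) z i = exp (ln ((ratio_op^^r) z i))" using h(1) by simp
      then show ?thesis using h(2) by (simp add: Y_def a_def L_def)
    qed
    have d2: "(Dn^^(Suc (Suc r))) L n = a (n + 2) - 2 * a (n + 1) + a n"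
    proof -
      have "(Dn^^(Suc (Suc r))) L = Dn (Dn a)" by (simp add: a_def)
      then show ?thesis by (simp add: Dn_def numeral_2_eq_2)
    qed
    have e1: "Y n * Y (n + 2) = exp (a n + a (n + 2))" using Ye n by (simp add: exp_add)
    have e2: "(Y (n + 1))^2 = exp (2 * a (n + 1))" using Ye n
      by (simp add: power2_eq_square exp_add[symmetric])
    have k: "(-1)^r * (a (n + 2) - 2 * a (n + 1) + a n) > 0" using key[OF r n] d2 by simp
    show ?thesis
    proof (cases "even r")
      case True
      then have "a n + a (n + 2) > 2 * a (n + 1)" using k by simp
      then have "exp (a n + a (n + 2)) > exp (2 * a (n + 1))" by simp
      then show ?thesis using True e1 e2 by (simp add: Y_def)
    next
      case False
      then have "a n + a (n + 2) < 2 * a (n + 1)" using k by simp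
      then have "exp (a n + a (n + 2)) < exp (2 * a (n + 1))" by simp
      then show ?thesis using False e1 e2 by (simp add: Y_def)
    qed
  qed
  have "log_monotonic_from k N z"
    unfolding log_monotonic_from_def
  proof (intro allI impI conjI)
    fix r assume r: "r + 1 \<le> k"
    have pos: "\<forall>n\<ge>N. (ratio_op^^r) z n > 0" using ratio_log[OF zpos] by blast
    {
      assume "odd r"
      then show "log_concave_from N ((ratio_op^^r) z)"
        unfolding log_concave_from_def using pos conv[OF r]
        by (auto simp: algebra_simps intro!: less_imp_le)
    next
      assume "even r"
      then show "log_convex_from N ((ratio_op^^r) z)"
        unfolding log_convex_from_def using pos conv[OF r]
        by (auto simp: algebra_simps intro!: less_imp_le)
    }
  qed
  then show "\<exists>N\<ge>3. log_monotonic_from k N (\<lambda>n. real (derangements_count n))"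
    using N3 unfolding z_def by blast
qed


end
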